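(* Given a family of smooth vector fields $(f_a:a\in A)$ on $\mathbb{R}^e$, there exists a linear map $\hat f:T_\omega(A)\to\mathrm{Vect}^\infty(\mathbb{R}^e)$ whose restriction to $\hat{\mathcal{L}}(A)$ is the unique Lie algebra morphism $\hat{\mathcal{L}}(A)\to\mathrm{Vect}^\infty(\mathbb{R}^e)$ satisfying $\hat f(\Psi_H^*(a))=f_a$ for all $a\in A$. Explicitly, $\hat f=f\circ\Phi_H^*$, i.e. $\hat f_{\mathbf{x}}=f_{\Phi_H^*\mathbf{x}}$.
   Context: Alphabet $A$ with commutative associative bracket $\{\cdot,\cdot\}$ on $A\cup\{0\}$ ($\{a,0\}=0$) and weight $\omega:A\to\{1,2,\dots\}$ additive on nonzero brackets, with finitely many letters of each weight; iterated bracket $\{a_1\cdots a_n\}$. $T_\omega(A)$: finite linear combinations of words (incl. empty word $\mathbf{1}$), concatenation $\otimes$, words orthonormal for $\langle\cdot,\cdot\rangle$. Hoffman adjoints $\Phi^*_H,\Psi^*_H:T_\omega(A)\to T_\omega(A)$: concatenation-multiplicative, $\Phi^*_H(a)=\sum_{n\ge1}\sum_{\{a_1\cdots a_n\}=a}\frac1{n!}a_1\cdots a_n$, $\Psi^*_H(a)=\sum_{n\ge1}\sum_{\{a_1\cdots a_n\}=a}\frac{(-1)^{n-1}}na_1\cdots a_n$; they are mutually inverse. $\mathcal{L}(A)$: Lie subalgebra of $(T_\omega(A),[x,y]=x\otimes y-y\otimes x)$ generated by the letters; $\hat{\mathcal{L}}(A):=\Psi^*_H\mathcal{L}(A)$ with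 the same bracket. $\mathrm{Vect}^\infty(\mathbb{R}^e)$: smooth vector fields, with $g\vartriangleright h:=g^i(\partial_ih^j)\partial_j$ and Lie bracket $[g,h]:=g\vartriangleright h-h\vartriangleright g$. The map $f:T_\omega(A)\to\mathrm{Vect}^\infty(\mathbb{R}^e)$ is linear with $f_{\mathbf{1}}=\mathrm{id}$, $f_{a_1\cdots a_n}=f_{a_1}\vartriangleright(\cdots\vartriangleright(f_{a_{n-1}}\vartriangleright f_{a_n})\cdots)$. *)

theory Defs
  imports "HOL-Analysis.Analysis"
begin

text \<open>The bracket on A \<union> {0} is encoded as br :: 'a => 'a => 'a option,
  None playing the role of 0 (so {a,0} = 0 is built in).\<close>

definition bracket_comm :: "('a \<Rightarrow> 'a \<Rightarrow> 'a option) \<Rightarrow> bool" where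
  "bracket_comm br \<longleftrightarrow> (\<forall>a b. br a b = br b a)"

definition bracket_assoc :: "('a \<Rightarrow> 'a \<Rightarrow> 'a option) \<Rightarrow> bool" where
  "bracket_assoc br \<longleftrightarrow> (\<forall>a b c.
     (case br a b of None \<Rightarrow> None | Some d \<Rightarrow> br d c) =
     (case br b c of None \<Rightarrow> None | Some d \<Rightarrow> br a d))"

definition weight_ok :: "('a \<Rightarrow> 'a \<Rightarrow> 'a option) \<Rightarrow> ('a \<Rightarrow> nat) \<Rightarrow> bool" where
  "weight_ok br \<omega> \<longleftrightarrow> (\<forall>a. 1 \<le> \<omega> a)
     \<and> (\<forall>a b c. br a b = Some c \<longrightarrow> \<omega> c = \<omega> a + \<omega> b)
     \<and> (\<forall>n. finite {a. \<omega> a = n})"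

fun ibr :: "('a \<Rightarrow> 'a \<Rightarrow> 'a option) \<Rightarrow> 'a list \<Rightarrow> 'a option" where
  "ibr br [] = None"
| "ibr br [a] = Some a"
| "ibr br (a # b # w) = (case ibr br (b # w) of None \<Rightarrow> None | Some c \<Rightarrow> br a c)"

section \<open>T_omega(A): finitely supported real functions on words\<close>

definition Tset :: "('a list \<Rightarrow> real) set" where
  "Tset = {x. finite {w. x w \<noteq> 0}}"

definition word :: "'a list \<Rightarrow> ('a list \<Rightarrow> real)" where
  "word v = (\<lambda>w. if w = v then 1 else 0)"

definition tadd :: "('a list \<Rightarrow> real) \<Rightarrow> ('a list \<Rightarrow> real) \<Rightarrow> ('a list \<Rightarrow> real)" where
  "tadd x y = (\<lambda>w. x w + y w)"

definition tscale :: "real \<Rightarrow> ('a list \<Rightarrow> real) \<Rightarrow> ('a list \<Rightarrow> real)" where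
  "tscale c x = (\<lambda>w. c * x w)"

definition conc :: "('a list \<Rightarrow> real) \<Rightarrow> ('a list \<Rightarrow> real) \<Rightarrow> ('a list \<Rightarrow> real)" where
  "conc x y = (\<lambda>w. \<Sum>i\<le>length w. x (take i w) * y (drop i w))"

definition commutator :: "('a list \<Rightarrow> real) \<Rightarrow> ('a list \<Rightarrow> real) \<Rightarrow> ('a list \<Rightarrow> real)" where
  "commutator x y = (\<lambda>w. conc x y w - conc y x w)"

definition phiL :: "('a \<Rightarrow> 'a \<Rightarrow> 'a option) \<Rightarrow> 'a \<Rightarrow> ('a list \<Rightarrow> real)" where
  "phiL br a = (\<lambda>w. if ibr br w = Some a then 1 / fact (length w) else 0)"

definition psiL :: "('a \<Rightarrow> 'a \<Rightarrow> 'a option) \<Rightarrow> 'a \<Rightarrow> ('a list \<Rightarrow> real)" where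
  "psiL br a = (\<lambda>w. if ibr br w = Some a
                      then (-1) ^ (length w - 1) / real (length w) else 0)"

definition mult_ext_word :: "('a \<Rightarrow> ('a list \<Rightarrow> real)) \<Rightarrow> 'a list \<Rightarrow> ('a list \<Rightarrow> real)" where
  "mult_ext_word L v = foldr (\<lambda>a acc. conc (L a) acc) v (word [])"

definition mult_ext :: "('a \<Rightarrow> ('a list \<Rightarrow> real)) \<Rightarrow> ('a list \<Rightarrow> real) \<Rightarrow> ('a list \<Rightarrow> real)" where
  "mult_ext L x = (\<lambda>w. \<Sum>v\<in>{v. x v \<noteq> 0}. x v * mult_ext_word L v w)"

definition PhiH :: "('a \<Rightarrow> 'a \<Rightarrow> 'a option) \<Rightarrow> ('a list \<Rightarrow> real) \<Rightarrow> ('a list \<Rightarrow> real)" where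
  "PhiH br = mult_ext (phiL br)"

definition PsiH :: "('a \<Rightarrow> 'a \<Rightarrow> 'a option) \<Rightarrow> ('a list \<Rightarrow> real) \<Rightarrow> ('a list \<Rightarrow> real)" where
  "PsiH br = mult_ext (psiL br)"

inductive_set LieA :: "('a list \<Rightarrow> real) set" where
  gen: "word [a] \<in> LieA"
| add: "x \<in> LieA \<Longrightarrow> y \<in> LieA \<Longrightarrow> tadd x y \<in> LieA"
| scale: "x \<in> LieA \<Longrightarrow> tscale c x \<in> LieA"
| brk: "x \<in> LieA \<Longrightarrow> y \<in> LieA \<Longrightarrow> commutator x y \<in> LieA"

definition LieHat :: "('a \<Rightarrow> 'a \<Rightarrow> 'a option) \<Rightarrow> ('a list \<Rightarrow> real) set" where
  "LieHat br = PsiH br ` LieA"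

fun Ck :: "nat \<Rightarrow> ('a::euclidean_space \<Rightarrow> 'b::euclidean_space) \<Rightarrow> bool" where
  "Ck 0 h = continuous_on UNIV h"
| "Ck (Suc k) h = ((\<forall>x. h differentiable (at x))
      \<and> (\<forall>v\<in>Basis. Ck k (\<lambda>x. frechet_derivative h (at x) v)))"

definition smooth_vf :: "(real^'e \<Rightarrow> real^'e) \<Rightarrow> bool" where
  "smooth_vf h \<longleftrightarrow> (\<forall>k. Ck k h)"

text \<open>(g |> h)(x) = sum_i g^i(x) (d_i h)(x) = Dh(x)(g(x)).\<close>
definition vf_act :: "(real^'e \<Rightarrow> real^'e) \<Rightarrow> (real^'e \<Rightarrow> real^'e) \<Rightarrow> (real^'e \<Rightarrow> real^'e)" where
  "vf_act g h = (\<lambda>x. frechet_derivative h (at x) (g x))"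

definition vf_bracket :: "(real^'e \<Rightarrow> real^'e) \<Rightarrow> (real^'e \<Rightarrow> real^'e) \<Rightarrow> (real^'e \<Rightarrow> real^'e)" where
  "vf_bracket g h = (\<lambda>x. vf_act g h x - vf_act h g x)"

fun fW :: "('a \<Rightarrow> real^'e \<Rightarrow> real^'e) \<Rightarrow> 'a list \<Rightarrow> (real^'e \<Rightarrow> real^'e)" where
  "fW F [] = id"
| "fW F [a] = F a"
| "fW F (a # b # w) = vf_act (F a) (fW F (b # w))"

definition fT :: "('a \<Rightarrow> real^'e \<Rightarrow> real^'e) \<Rightarrow> ('a list \<Rightarrow> real) \<Rightarrow> (real^'e \<Rightarrow> real^'e)" where
  "fT F x = (\<lambda>p. \<Sum>v\<in>{v. x v \<noteq> 0}. x v *\<^sub>R fW F v p)"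

definition fhat :: "('a \<Rightarrow> 'a \<Rightarrow> 'a option) \<Rightarrow> ('a \<Rightarrow> real^'e \<Rightarrow> real^'e)
                   \<Rightarrow> ('a list \<Rightarrow> real) \<Rightarrow> (real^'e \<Rightarrow> real^'e)" where
  "fhat br F x = fT F (PhiH br x)"

definition linear_on_T :: "(('a list \<Rightarrow> real) \<Rightarrow> (real^'e \<Rightarrow> real^'e)) \<Rightarrow> ('a list \<Rightarrow> real) set \<Rightarrow> bool" where
  "linear_on_T g S \<longleftrightarrow>
     (\<forall>x\<in>S. \<forall>y\<in>S. g (tadd x y) = (\<lambda>p. g x p + g y p))
   \<and> (\<forall>c. \<forall>x\<in>S. g (tscale c x) = (\<lambda>p. c *\<^sub>R g x p))"

definition lie_morph_on :: "(('a list \<Rightarrow> real) \<Rightarrow> (real^'e \<Rightarrow> real^'e)) \<Rightarrow> ('a list \<Rightarrow> real) set \<Rightarrow> bool" where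
  "lie_morph_on g S \<longleftrightarrow> linear_on_T g S
   \<and> (\<forall>x\<in>S. smooth_vf (g x))
   \<and> (\<forall>x\<in>S. \<forall>y\<in>S. g (commutator x y) = vf_bracket (g x) (g y))"

end

theory Submission
  imports Defs "HOL-Computational_Algebra.Formal_Power_Series"
begin


abbreviation pd :: "('a::euclidean_space \<Rightarrow> 'b::euclidean_space) \<Rightarrow> 'a \<Rightarrow> 'a \<Rightarrow> 'b" where
  "pd h v \<equiv> (\<lambda>x. frechet_derivative h (at x) v)"

lemma Ck_cont: "Ck k h \<Longrightarrow> continuous_on UNIV h"
  by (cases k) (auto intro!: differentiable_imp_continuous_on simp: differentiable_on_def)

lemma Ck_diff: "Ck (Suc k) h \<Longrightarrow> h differentiable (at x)"
  by simp

lemma Ck_mono: "Ck (Suc k) h \<Longrightarrow> Ck k h"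
proof (induction k arbitrary: h)
  case 0 thus ?case by (auto intro!: differentiable_imp_continuous_on simp: differentiable_on_def)
next
  case (Suc k) thus ?case by auto
qed


lemma fd_works: "h differentiable (at x) \<Longrightarrow> (h has_derivative frechet_derivative h (at x)) (at x)"
  using frechet_derivative_works by blast

lemma fd_eq: "(h has_derivative h') (at x) \<Longrightarrow> frechet_derivative h (at x) = h'"
  using frechet_derivative_at by metis

lemma fd_linear: "h differentiable (at x) \<Longrightarrow> linear (frechet_derivative h (at x))"
  using fd_works has_derivative_linear by blast

lemma Ck_const: "Ck k (\<lambda>x. c)"
proof (induction k arbitrary: c)
  case 0 thus ?case by simp
next
  case (Suc k)
  have "frechet_derivative (\<lambda>x. c) (at x) = (\<lambda>_. 0)" for x
    by (rule fd_eq) simp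
  thus ?case using Suc by simp
qed

lemma Ck_blin:
  assumes L: "bounded_linear L" shows "Ck k h \<Longrightarrow> Ck k (\<lambda>x. L (h x))"
proof (induction k arbitrary: h)
  case 0 thus ?case
    using L by (auto intro!: continuous_on_compose2[OF linear_continuous_on[OF L]])
next
  case (Suc k)
  have d: "frechet_derivative (\<lambda>x. L (h x)) (at x) = (\<lambda>y. L (frechet_derivative h (at x) y))" for x
    by (rule fd_eq, rule bounded_linear.has_derivative[OF L], rule fd_works) (use Suc.prems in simp)
  have "(\<lambda>x. L (h x)) differentiable (at x)" for x
    using bounded_linear.has_derivative[OF L fd_works[of h x]] Suc.prems
    by (auto simp: differentiable_def)
  thus ?case using Suc by (simp add: d)
qed

lemma Ck_id: "Ck k (\<lambda>x. x)"
proof (cases k)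
  case 0 thus ?thesis by simp
next
  case (Suc m)
  have d: "frechet_derivative (\<lambda>x. x) (at x) = (\<lambda>y. y)" for x::'a
    by (rule fd_eq) (rule has_derivative_ident)
  show ?thesis using Suc by (simp add: d Ck_const)
qed

lemma Ck_add: "Ck k f \<Longrightarrow> Ck k g \<Longrightarrow> Ck k (\<lambda>x. f x + g x)"
proof (induction k arbitrary: f g)
  case 0 thus ?case by (auto intro: continuous_on_add)
next
  case (Suc k)
  have d: "frechet_derivative (\<lambda>x. f x + g x) (at x) = (\<lambda>y. frechet_derivative f (at x) y + frechet_derivative g (at x) y)" for x
    by (rule fd_eq, rule has_derivative_add; rule fd_works) (use Suc.prems in simp)+
  show ?case using Suc by (auto simp: d)
qed

lemma Ck_sum: "finite S \<Longrightarrow> (\<And>i. i \<in> S \<Longrightarrow> Ck k (f i)) \<Longrightarrow> Ck k (\<lambda>x. \<Sum>i\<in>S. f i x)"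
  by (induction S rule: finite_induct) (auto intro: Ck_add Ck_const)

lemma Ck_sum': "(\<And>i. i \<in> S \<Longrightarrow> Ck k (f i)) \<Longrightarrow> Ck k (\<lambda>x. \<Sum>i\<in>S. f i x)"
  by (cases "finite S") (auto intro: Ck_sum Ck_const)

lemma Ck_scaleR: "Ck k f \<Longrightarrow> Ck k g \<Longrightarrow> Ck k (\<lambda>x. f x *\<^sub>R g x)"
proof (induction k arbitrary: f g)
  case 0 thus ?case by (auto intro: continuous_on_scaleR)
next
  case (Suc k)
  have d: "frechet_derivative (\<lambda>x. f x *\<^sub>R g x) (at x) = (\<lambda>y. f x *\<^sub>R frechet_derivative g (at x) y + frechet_derivative f (at x) y *\<^sub>R g x)" for x
    by (rule fd_eq, rule has_derivative_scaleR; rule fd_works) (use Suc.prems in simp)+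
  have df: "(\<lambda>x. f x *\<^sub>R g x) differentiable (at x)" for x
    using Suc.prems by (auto intro: differentiable_compose differentiable_scaleR)
  show ?case
  proof (simp only: Ck.simps, intro conjI ballI allI)
    fix x show "(\<lambda>x. f x *\<^sub>R g x) differentiable at x" by (rule df)
  next
    fix v :: 'a assume v: "v \<in> Basis"
    show "Ck k (\<lambda>x. frechet_derivative (\<lambda>x. f x *\<^sub>R g x) (at x) v)"
      unfolding d using Suc.prems v
      by (auto intro!: Ck_add Suc.IH intro: Ck_mono)
  qed
qed


lemma line_deriv:
  fixes f :: "'a::euclidean_space \<Rightarrow> real"
  assumes "\<forall>x. f differentiable at x"
  shows "((\<lambda>s. f (q + s *\<^sub>R u)) has_real_derivative pd f u (q + s *\<^sub>R u)) (at s)"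
proof -
  have l: "((\<lambda>s. q + s *\<^sub>R u) has_derivative (\<lambda>s. s *\<^sub>R u)) (at s)"
    by (auto intro!: derivative_eq_intros)
  have "((f \<circ> (\<lambda>s. q + s *\<^sub>R u)) has_derivative (frechet_derivative f (at (q + s *\<^sub>R u)) \<circ> (\<lambda>s. s *\<^sub>R u))) (at s)"
    by (rule diff_chain_at[OF l]) (use assms fd_works in blast)
  moreover have "(frechet_derivative f (at (q + s *\<^sub>R u)) \<circ> (\<lambda>s. s *\<^sub>R u)) = (*) (pd f u (q + s *\<^sub>R u))"
    using fd_linear[of f "q + s *\<^sub>R u"] assms
    by (auto simp: fun_eq_iff linear_cmul)
  ultimately show ?thesis by (simp add: has_field_derivative_def o_def)
qed

lemma clairaut_delta:
  fixes f :: "'a::euclidean_space \<Rightarrow> real"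
  assumes df: "\<forall>x. f differentiable at x" and dfu: "\<forall>x. pd f u differentiable at x" and t: "t > 0"
  shows "\<exists>\<sigma> \<tau>. 0 < \<sigma> \<and> \<sigma> < t \<and> 0 < \<tau> \<and> \<tau> < t \<and>
     f (p + t *\<^sub>R u + t *\<^sub>R v) - f (p + t *\<^sub>R u) - f (p + t *\<^sub>R v) + f p
       = t * t * pd (pd f u) v (p + \<sigma> *\<^sub>R u + \<tau> *\<^sub>R v)"
proof -
  define \<psi> where "\<psi> s = f ((p + t *\<^sub>R v) + s *\<^sub>R u) - f (p + s *\<^sub>R u)" for s
  have "DERIV \<psi> s :> (pd f u ((p + t *\<^sub>R v) + s *\<^sub>R u) - pd f u (p + s *\<^sub>R u))" for s
    unfolding \<psi>_def by (intro DERIV_diff line_deriv df)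
  then obtain \<sigma> where s: "0 < \<sigma>" "\<sigma> < t"
    and e1: "\<psi> t - \<psi> 0 = (t - 0) * (pd f u ((p + t *\<^sub>R v) + \<sigma> *\<^sub>R u) - pd f u (p + \<sigma> *\<^sub>R u))"
    using MVT2[OF t, of \<psi> "\<lambda>s. pd f u ((p + t *\<^sub>R v) + s *\<^sub>R u) - pd f u (p + s *\<^sub>R u)"] by blast
  define chi where "chi r = pd f u ((p + \<sigma> *\<^sub>R u) + r *\<^sub>R v)" for r
  have "DERIV chi r :> pd (pd f u) v ((p + \<sigma> *\<^sub>R u) + r *\<^sub>R v)" for r
    unfolding chi_def by (intro line_deriv dfu)
  then obtain \<tau> where tt: "0 < \<tau>" "\<tau> < t"
    and e2: "chi t - chi 0 = (t - 0) * pd (pd f u) v ((p + \<sigma> *\<^sub>R u) + \<tau> *\<^sub>R v)"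
    using MVT2[OF t, of chi "\<lambda>r. pd (pd f u) v ((p + \<sigma> *\<^sub>R u) + r *\<^sub>R v)"] by blast
  have "pd f u ((p + t *\<^sub>R v) + \<sigma> *\<^sub>R u) - pd f u (p + \<sigma> *\<^sub>R u) = chi t - chi 0"
    unfolding chi_def by (simp add: algebra_simps)
  hence "\<psi> t - \<psi> 0 = t * t * pd (pd f u) v (p + \<sigma> *\<^sub>R u + \<tau> *\<^sub>R v)"
    using e1 e2 by simp
  moreover have "\<psi> t - \<psi> 0 = f (p + t *\<^sub>R u + t *\<^sub>R v) - f (p + t *\<^sub>R u) - f (p + t *\<^sub>R v) + f p"
    unfolding \<psi>_def by (simp add: algebra_simps)
  ultimately show ?thesis using s tt by metis
qed

lemma clairaut:
  fixes f :: "'a::euclidean_space \<Rightarrow> real"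
  assumes df: "\<forall>x. f differentiable at x" and dfu: "\<forall>x. pd f u differentiable at x"
    and dfv: "\<forall>x. pd f v differentiable at x"
    and cu: "continuous_on UNIV (pd (pd f u) v)" and cv: "continuous_on UNIV (pd (pd f v) u)"
  shows "pd (pd f u) v p = pd (pd f v) u p"
proof (rule ccontr)
  let ?A = "pd (pd f u) v" and ?B = "pd (pd f v) u"
  assume ne: "?A p \<noteq> ?B p"
  define e where "e = \<bar>?A p - ?B p\<bar> / 2"
  have e: "e > 0" using ne by (simp add: e_def)
  obtain d1 where d1: "d1 > 0" "\<And>x. dist x p < d1 \<Longrightarrow> dist (?A x) (?A p) < e"
    using cu e unfolding continuous_on_iff by blast
  obtain d2 where d2: "d2 > 0" "\<And>x. dist x p < d2 \<Longrightarrow> dist (?B x) (?B p) < e"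
    using cv e unfolding continuous_on_iff by blast
  define t where "t = min d1 d2 / (norm u + norm v + 1)"
  have np: "norm u + norm v + 1 > 0" by (smt (verit) norm_ge_zero)
  have t: "t > 0" using d1 d2 np by (simp add: t_def)
  have tb: "t * (norm u + norm v) < min d1 d2"
  proof -
    have "t * (norm u + norm v) < t * (norm u + norm v + 1)" using t by simp
    also have "\<dots> = min d1 d2" unfolding t_def using np by simp
    finally show ?thesis .
  qed
  have near: "dist (p + a *\<^sub>R u + b *\<^sub>R v) p < min d1 d2" if "0 < a" "a < t" "0 < b" "b < t" for a b
  proof -
    have "dist (p + a *\<^sub>R u + b *\<^sub>R v) p = norm (a *\<^sub>R u + b *\<^sub>R v)" by (simp add: dist_norm)
    also have "\<dots> \<le> a * norm u + b * norm v"
      using norm_triangle_ineq[of "a *\<^sub>R u" "b *\<^sub>R v"] that by simp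
    also have "\<dots> \<le> t * norm u + t * norm v"
      using that by (intro add_mono mult_right_mono) auto
    also have "\<dots> < min d1 d2" using tb by (simp add: algebra_simps)
    finally show ?thesis .
  qed
  obtain s1 t1 where st1: "0 < s1" "s1 < t" "0 < t1" "t1 < t"
    "f (p + t *\<^sub>R u + t *\<^sub>R v) - f (p + t *\<^sub>R u) - f (p + t *\<^sub>R v) + f p = t * t * ?A (p + s1 *\<^sub>R u + t1 *\<^sub>R v)"
    using clairaut_delta[OF df dfu t] by blast
  obtain s2 t2 where st2: "0 < s2" "s2 < t" "0 < t2" "t2 < t"
    "f (p + t *\<^sub>R v + t *\<^sub>R u) - f (p + t *\<^sub>R v) - f (p + t *\<^sub>R u) + f p = t * t * ?B (p + s2 *\<^sub>R v + t2 *\<^sub>R u)"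
    using clairaut_delta[OF df dfv t] by blast
  have "p + t *\<^sub>R v + t *\<^sub>R u = p + t *\<^sub>R u + t *\<^sub>R v" by (simp add: algebra_simps)
  hence "t * t * ?A (p + s1 *\<^sub>R u + t1 *\<^sub>R v) = t * t * ?B (p + s2 *\<^sub>R v + t2 *\<^sub>R u)"
  proof -
    assume e: "p + t *\<^sub>R v + t *\<^sub>R u = p + t *\<^sub>R u + t *\<^sub>R v"
    show ?thesis using st1(5) st2(5) unfolding e by linarith
  qed
  hence eq: "?A (p + s1 *\<^sub>R u + t1 *\<^sub>R v) = ?B (p + s2 *\<^sub>R v + t2 *\<^sub>R u)"
    using t by simp
  have a: "dist (?A (p + s1 *\<^sub>R u + t1 *\<^sub>R v)) (?A p) < e"
    using d1(2) near[OF st1(1-4)] by simp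
  have b: "dist (?B (p + s2 *\<^sub>R v + t2 *\<^sub>R u)) (?B p) < e"
  proof -
    have "p + s2 *\<^sub>R v + t2 *\<^sub>R u = p + t2 *\<^sub>R u + s2 *\<^sub>R v" by (simp add: algebra_simps)
    moreover have "dist (p + t2 *\<^sub>R u + s2 *\<^sub>R v) p < d2" using near[of t2 s2] st2 by simp
    ultimately show ?thesis using d2(2) by metis
  qed
  from a b eq have "\<bar>?A p - ?B p\<bar> < 2 * e" by (simp add: dist_real_def)
  thus False by (simp add: e_def)
qed


lemma pd_blin:
  assumes L: "bounded_linear L" and d: "h differentiable (at x)"
  shows "frechet_derivative (\<lambda>x. L (h x)) (at x) = (\<lambda>y. L (frechet_derivative h (at x) y))"
  by (rule fd_eq, rule bounded_linear.has_derivative[OF L], rule fd_works[OF d])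

lemma sym2:
  fixes k :: "'a::euclidean_space \<Rightarrow> 'b::euclidean_space"
  assumes k: "Ck 2 k" and i: "i \<in> Basis" and j: "j \<in> Basis"
  shows "pd (pd k i) j p = pd (pd k j) i p"
proof (rule euclidean_eqI)
  fix b :: 'b assume b: "b \<in> Basis"
  let ?f = "\<lambda>x. k x \<bullet> b"
  have dk: "\<forall>x. k differentiable at x" using k by (simp add: numeral_2_eq_2)
  have Ci: "Ck 1 (pd k u)" if "u \<in> Basis" for u using k that by (simp add: numeral_2_eq_2)
  have dki: "\<forall>x. pd k u differentiable at x" if "u \<in> Basis" for u using Ci[OF that] by simp
  have pf: "pd ?f u = (\<lambda>x. pd k u x \<bullet> b)" for u
    using pd_blin[OF bounded_linear_inner_left, of k] dk by (auto simp: fun_eq_iff)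
  have ppf: "pd (pd ?f u) v = (\<lambda>x. pd (pd k u) v x \<bullet> b)" if "u \<in> Basis" for u v
    unfolding pf using pd_blin[OF bounded_linear_inner_left, of "pd k u"] dki[OF that] by (auto simp: fun_eq_iff)
  have dfi: "\<forall>x. pd ?f u differentiable at x" if "u \<in> Basis" for u
    unfolding pf using dki[OF that] by (auto intro: differentiable_compose bounded_linear_imp_differentiable bounded_linear_inner_left
        simp: o_def)
  have cont: "continuous_on UNIV (pd (pd ?f u) v)" if "u \<in> Basis" "v \<in> Basis" for u v
    unfolding ppf[OF that(1)] using Ci[OF that(1)] that(2)
    by (auto intro!: continuous_on_inner continuous_on_const intro: Ck_cont)
  have "\<forall>x. ?f differentiable at x"
    using dk by (auto intro: differentiable_compose bounded_linear_imp_differentiable bounded_linear_inner_left simp: o_def)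
  from clairaut[OF this dfi[OF i] dfi[OF j] cont[OF i j] cont[OF j i]]
  show "pd (pd k i) j p \<bullet> b = pd (pd k j) i p \<bullet> b"
    using ppf[OF i] ppf[OF j] by (simp add: fun_eq_iff)
qed



lemma fd_repr:
  assumes "h differentiable (at x)"
  shows "frechet_derivative h (at x) y = (\<Sum>i\<in>Basis. (y \<bullet> i) *\<^sub>R pd h i x)"
proof -
  have lin: "linear (frechet_derivative h (at x))" by (rule fd_linear[OF assms])
  have "frechet_derivative h (at x) y = frechet_derivative h (at x) (\<Sum>i\<in>Basis. (y \<bullet> i) *\<^sub>R i)"
    by (simp add: euclidean_representation)
  also have "\<dots> = (\<Sum>i\<in>Basis. (y \<bullet> i) *\<^sub>R pd h i x)"
    by (simp add: linear_sum[OF lin] linear_scale[OF lin] o_def)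
  finally show ?thesis .
qed

lemma vf_repr:
  assumes "\<forall>x. h differentiable (at x)"
  shows "vf_act g h = (\<lambda>p. \<Sum>i\<in>Basis. (g p \<bullet> i) *\<^sub>R pd h i p)"
  using fd_repr assms by (auto simp: vf_act_def fun_eq_iff)

lemma smooth_diff: "smooth_vf h \<Longrightarrow> h differentiable (at x)"
proof -
  assume "smooth_vf h" hence "Ck (Suc 0) h" unfolding smooth_vf_def by blast
  thus ?thesis by simp
qed

lemma smooth_pd: "smooth_vf h \<Longrightarrow> i \<in> Basis \<Longrightarrow> smooth_vf (pd h i)"
  unfolding smooth_vf_def
proof
  fix k assume "\<forall>k. Ck k h" "i \<in> Basis"
  hence "Ck (Suc k) h" by blast
  thus "Ck k (pd h i)" using \<open>i \<in> Basis\<close> by simp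
qed

lemma Ck_inner: "Ck k g \<Longrightarrow> Ck k (\<lambda>p. g p \<bullet> i)"
  using Ck_blin[OF bounded_linear_inner_left] .

lemma smooth_vf_act:
  assumes g: "smooth_vf g" and h: "smooth_vf h" shows "smooth_vf (vf_act g h)"
proof -
  have "Ck k (\<lambda>p. \<Sum>i\<in>Basis. (g p \<bullet> i) *\<^sub>R pd h i p)" for k
  proof (rule Ck_sum[OF finite_Basis])
    fix i :: "real^'a" assume i: "i \<in> Basis"
    have "Ck k g" using g unfolding smooth_vf_def by blast
    hence "Ck k (\<lambda>p. g p \<bullet> i)" by (rule Ck_inner)
    moreover have "Ck k (pd h i)" using smooth_pd[OF h i] unfolding smooth_vf_def by blast
    ultimately show "Ck k (\<lambda>p. (g p \<bullet> i) *\<^sub>R pd h i p)" by (rule Ck_scaleR)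
  qed
  thus ?thesis unfolding vf_repr[OF allI[OF smooth_diff[OF h]]] smooth_vf_def by blast
qed

lemma smooth_id: "smooth_vf id"
proof -
  have "Ck k (\<lambda>x::real^'e. x)" for k by (rule Ck_id)
  thus ?thesis unfolding smooth_vf_def id_def by blast
qed

lemma smooth_add: "smooth_vf f \<Longrightarrow> smooth_vf g \<Longrightarrow> smooth_vf (\<lambda>x. f x + g x)"
  unfolding smooth_vf_def by (intro allI Ck_add) auto

lemma smooth_scale: "smooth_vf f \<Longrightarrow> smooth_vf (\<lambda>x. c *\<^sub>R f x)"
  unfolding smooth_vf_def by (intro allI Ck_scaleR[OF Ck_const]) auto

lemma smooth_sum: "(\<And>i. i \<in> S \<Longrightarrow> smooth_vf (f i)) \<Longrightarrow> smooth_vf (\<lambda>x. \<Sum>i\<in>S. f i x)"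
  unfolding smooth_vf_def by (intro allI Ck_sum') auto

lemma vf_act_deriv:
  assumes h: "smooth_vf h" and k: "smooth_vf k"
  shows "frechet_derivative (vf_act h k) (at p) y =
     (\<Sum>i\<in>Basis. (h p \<bullet> i) *\<^sub>R frechet_derivative (pd k i) (at p) y + (frechet_derivative h (at p) y \<bullet> i) *\<^sub>R pd k i p)"
proof -
  have "(vf_act h k has_derivative (\<lambda>y. \<Sum>i\<in>Basis. (h p \<bullet> i) *\<^sub>R frechet_derivative (pd k i) (at p) y + (frechet_derivative h (at p) y \<bullet> i) *\<^sub>R pd k i p)) (at p)"
    unfolding vf_repr[OF allI[OF smooth_diff[OF k]]]
    apply (rule has_derivative_sum)
    apply (rule has_derivative_scaleR)
     apply (rule bounded_linear.has_derivative[OF bounded_linear_inner_left])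
     apply (rule fd_works[OF smooth_diff[OF h]])
    apply (rule fd_works[OF smooth_diff[OF smooth_pd[OF k]]])
    apply assumption
    done
  thus ?thesis by (simp add: fd_eq)
qed



lemma comm_id:
  fixes g h k :: "real^'e \<Rightarrow> real^'e"
  assumes g: "smooth_vf g" and h: "smooth_vf h" and k: "smooth_vf k"
  shows "vf_act (vf_bracket g h) k p = vf_act g (vf_act h k) p - vf_act h (vf_act g k) p"
proof -
  define S where "S i j = pd (pd k i) j p" for i j
  define K where "K i = pd k i p" for i
  have Ssym: "S i j = S j i" if "i \<in> Basis" "j \<in> Basis" for i j
    unfolding S_def using sym2[of k i j p] k that unfolding smooth_vf_def by blast
  have inner: "frechet_derivative (pd k i) (at p) y = (\<Sum>j\<in>Basis. (y \<bullet> j) *\<^sub>R S i j)" if "i \<in> Basis" for i y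
    unfolding S_def using fd_repr smooth_diff[OF smooth_pd[OF k that]] by blast
  define T where "T a b = (\<Sum>i\<in>Basis. \<Sum>j\<in>Basis. (b \<bullet> i * (a \<bullet> j)) *\<^sub>R S i j)" for a b :: "real^'e"
  have Tsym: "T a b = T b a" for a b
  proof -
    have "T b a = (\<Sum>j\<in>Basis. \<Sum>i\<in>Basis. (a \<bullet> i * (b \<bullet> j)) *\<^sub>R S i j)"
      unfolding T_def by (rule sum.swap)
    also have "\<dots> = T a b" unfolding T_def
      by (intro sum.cong refl) (simp add: Ssym mult.commute)
    finally show ?thesis by simp
  qed
  have A: "vf_act a (vf_act b k) p = T (a p) (b p) + (\<Sum>i\<in>Basis. (vf_act a b p \<bullet> i) *\<^sub>R K i)"
    if a: "smooth_vf a" and b: "smooth_vf b" for a b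
  proof -
    have "vf_act a (vf_act b k) p = (\<Sum>i\<in>Basis. (b p \<bullet> i) *\<^sub>R frechet_derivative (pd k i) (at p) (a p) + (vf_act a b p \<bullet> i) *\<^sub>R K i)"
      unfolding vf_act_def[of a] using vf_act_deriv[OF b k] by (simp add: K_def vf_act_def)
    also have "\<dots> = (\<Sum>i\<in>Basis. (b p \<bullet> i) *\<^sub>R (\<Sum>j\<in>Basis. (a p \<bullet> j) *\<^sub>R S i j) + (vf_act a b p \<bullet> i) *\<^sub>R K i)"
      by (intro sum.cong refl) (simp add: inner)
    also have "\<dots> = T (a p) (b p) + (\<Sum>i\<in>Basis. (vf_act a b p \<bullet> i) *\<^sub>R K i)"
      by (simp add: T_def sum.distrib scaleR_sum_right)
    finally show ?thesis .
  qed
  have B: "vf_act (vf_bracket g h) k p = (\<Sum>i\<in>Basis. ((vf_act g h p - vf_act h g p) \<bullet> i) *\<^sub>R K i)"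
    unfolding vf_repr[OF allI[OF smooth_diff[OF k]]] K_def vf_bracket_def by simp
  show ?thesis unfolding A[OF g h] A[OF h g] B Tsym[of "g p"]
    by (simp add: inner_diff_left scaleR_left_diff_distrib sum_subtractf)
qed


definition supp :: "('a list \<Rightarrow> real) \<Rightarrow> 'a list set" where "supp x = {w. x w \<noteq> 0}"
abbreviation fin :: "('a list \<Rightarrow> real) \<Rightarrow> bool" where "fin x \<equiv> finite (supp x)"

definition ev :: "('a list \<Rightarrow> real) \<Rightarrow> ('a list \<Rightarrow> 'b::real_vector) \<Rightarrow> 'b" where
  "ev x \<Phi> = (\<Sum>w\<in>supp x. x w *\<^sub>R \<Phi> w)"

lemma Tset_fin: "x \<in> Tset \<longleftrightarrow> fin x" by (simp add: Tset_def supp_def)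

lemma ev_superset: "finite S \<Longrightarrow> supp x \<subseteq> S \<Longrightarrow> ev x \<Phi> = (\<Sum>w\<in>S. x w *\<^sub>R \<Phi> w)"
  unfolding ev_def by (rule sum.mono_neutral_left) (auto simp: supp_def)

lemma supp_tadd: "supp (tadd x y) \<subseteq> supp x \<union> supp y" by (auto simp: supp_def tadd_def)
lemma fin_tadd: "fin x \<Longrightarrow> fin y \<Longrightarrow> fin (tadd x y)" using supp_tadd finite_subset by (metis finite_Un)
lemma supp_tscale: "supp (tscale c x) \<subseteq> supp x" by (auto simp: supp_def tscale_def)
lemma fin_tscale: "fin x \<Longrightarrow> fin (tscale c x)" using supp_tscale finite_subset by metis
lemma supp_word: "supp (word v) = {v}" by (auto simp: supp_def word_def)
lemma fin_word: "fin (word v)" by (simp add: supp_word)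

lemma ev_tadd: "fin x \<Longrightarrow> fin y \<Longrightarrow> ev (tadd x y) \<Phi> = ev x \<Phi> + ev y \<Phi>"
  by (subst (1 2 3) ev_superset[of "supp x \<union> supp y"])
     (auto simp: supp_def tadd_def scaleR_add_left sum.distrib)

lemma ev_tscale: "fin x \<Longrightarrow> ev (tscale c x) \<Phi> = c *\<^sub>R ev x \<Phi>"
  by (subst (1 2) ev_superset[of "supp x"])
     (auto simp: supp_def tscale_def scaleR_sum_right)

lemma ev_word: "ev (word v) \<Phi> = \<Phi> v"
  unfolding ev_def supp_word by (simp add: word_def)

lemma ev_add2: "ev x (\<lambda>w. \<Phi> w + \<Psi> w) = ev x \<Phi> + ev x \<Psi>"
  by (simp add: ev_def scaleR_add_right sum.distrib)

lemma ev_diff2: "ev x (\<lambda>w. \<Phi> w - \<Psi> w) = ev x \<Phi> - ev x \<Psi>"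
  by (simp add: ev_def scaleR_diff_right sum_subtractf)

lemma ev_scale2: "ev x (\<lambda>w. c *\<^sub>R \<Phi> w) = c *\<^sub>R ev x \<Phi>"
  by (simp add: ev_def scaleR_sum_right mult.commute)

lemma ev_zero2: "ev x (\<lambda>w. 0) = 0"
  by (simp add: ev_def)

lemma ev_blin: "bounded_linear L \<Longrightarrow> ev x (\<lambda>w. L (\<Phi> w)) = L (ev x \<Phi>)"
  by (simp add: ev_def linear_sum[OF bounded_linear.linear] linear_scale[OF bounded_linear.linear] o_def)

lemma ev_sum2: "ev x (\<lambda>w. \<Sum>i\<in>I. \<Phi> i w) = (\<Sum>i\<in>I. ev x (\<Phi> i))"
  by (simp add: ev_def scaleR_sum_right sum.swap[of _ I])

lemma ev_ev_swap: "ev x (\<lambda>v. ev y (\<lambda>u. \<Phi> v u)) = ev y (\<lambda>u. ev x (\<lambda>v. \<Phi> v u))"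
  by (simp add: ev_def scaleR_sum_right sum.swap[of _ "supp x"] mult.commute)

lemma ev_cong: "(\<And>w. w \<in> supp x \<Longrightarrow> \<Phi> w = \<Psi> w) \<Longrightarrow> ev x \<Phi> = ev x \<Psi>"
  by (simp add: ev_def)

lemma ev_recon: "fin x \<Longrightarrow> ev x (\<lambda>v. word v w) = x w"
proof -
  assume f: "fin x"
  have "ev x (\<lambda>v. word v w) = (\<Sum>v\<in>supp x. if w = v then x v else 0)"
    unfolding ev_def by (intro sum.cong) (auto simp: word_def)
  also have "\<dots> = x w" using f by (simp add: sum.delta) (auto simp: supp_def)
  finally show ?thesis .
qed

lemma take_drop_inj: "inj_on (\<lambda>i. (take i w, drop i w)) {..length w}"
proof (rule inj_onI)
  fix i j assume "i \<in> {..length w}" "j \<in> {..length w}" "(take i w, drop i w) = (take j w, drop j w)"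
  hence "length (take i w) = length (take j w)" "i \<le> length w" "j \<le> length w" by auto
  thus "i = j" by simp
qed

lemma img_split: "(\<lambda>i. (take i w, drop i w)) ` {..length w} = {p. fst p @ snd p = w}"
proof (rule set_eqI, rule iffI)
  fix p :: "'a list \<times> 'a list" assume "p \<in> {p. fst p @ snd p = w}"
  then obtain v u where "p = (v, u)" "v @ u = w" by (cases p) auto
  thus "p \<in> (\<lambda>i. (take i w, drop i w)) ` {..length w}"
    by (auto intro!: image_eqI[of _ _ "length v"])
qed auto

lemma fin_split: "finite {p. fst p @ snd p = w}"
  unfolding img_split[symmetric] by simp

lemma conc_pairs:
  assumes "fin x" "fin y"
  shows "conc x y w = (\<Sum>p\<in>{p\<in>supp x \<times> supp y. fst p @ snd p = w}. x (fst p) * y (snd p))"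
proof -
  have "conc x y w = (\<Sum>i\<le>length w. x (take i w) * y (drop i w))" by (simp add: conc_def)
  also have "\<dots> = (\<Sum>p\<in>(\<lambda>i. (take i w, drop i w)) ` {..length w}. x (fst p) * y (snd p))"
    by (subst sum.reindex[OF take_drop_inj]) simp
  also have "\<dots> = (\<Sum>p\<in>{p\<in>supp x \<times> supp y. fst p @ snd p = w}. x (fst p) * y (snd p))"
    unfolding img_split
    by (rule sum.mono_neutral_right[OF fin_split]) (auto simp: supp_def)
  finally show ?thesis .
qed

lemma supp_conc: assumes "fin x" "fin y"
  shows "supp (conc x y) \<subseteq> (\<lambda>p. fst p @ snd p) ` (supp x \<times> supp y)"
proof
  fix w assume "w \<in> supp (conc x y)"
  hence "(\<Sum>p\<in>{p\<in>supp x \<times> supp y. fst p @ snd p = w}. x (fst p) * y (snd p)) \<noteq> 0"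
    using conc_pairs[OF assms] by (simp add: supp_def)
  hence "{p\<in>supp x \<times> supp y. fst p @ snd p = w} \<noteq> {}" by (metis sum.empty)
  then obtain p where "p \<in> supp x \<times> supp y" "fst p @ snd p = w" by blast
  thus "w \<in> (\<lambda>p. fst p @ snd p) ` (supp x \<times> supp y)" by auto
qed

lemma fin_conc: "fin x \<Longrightarrow> fin y \<Longrightarrow> fin (conc x y)"
  by (rule finite_subset[OF supp_conc finite_imageI]) auto

lemma ev_conc: assumes fx: "fin x" and fy: "fin y"
  shows "ev (conc x y) \<Phi> = ev x (\<lambda>v. ev y (\<lambda>u. \<Phi> (v @ u)))"
proof -
  let ?S = "supp x \<times> supp y" and ?g = "\<lambda>p::'a list \<times> 'a list. fst p @ snd p"
  let ?h = "\<lambda>p. (x (fst p) * y (snd p)) *\<^sub>R \<Phi> (fst p @ snd p)"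
  have fS: "finite ?S" using fx fy by simp
  have "ev (conc x y) \<Phi> = (\<Sum>w\<in>?g ` ?S. conc x y w *\<^sub>R \<Phi> w)"
    by (rule ev_superset[OF finite_imageI[OF fS] supp_conc[OF fx fy]])
  also have "\<dots> = (\<Sum>w\<in>?g ` ?S. \<Sum>p\<in>{p\<in>?S. ?g p = w}. ?h p)"
    by (intro sum.cong refl) (auto simp: conc_pairs[OF fx fy] scaleR_sum_left)
  also have "\<dots> = (\<Sum>p\<in>?S. ?h p)"
    by (rule sum.group[OF fS finite_imageI[OF fS]]) simp
  also have "\<dots> = ev x (\<lambda>v. ev y (\<lambda>u. \<Phi> (v @ u)))"
    unfolding ev_def sum.cartesian_product'
    by (simp add: scaleR_sum_right)
  finally show ?thesis .
qed

lemma supp_lincomb: "supp (\<lambda>w. ev x (\<lambda>v. G v w)) \<subseteq> (\<Union>v\<in>supp x. supp (G v))"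
proof
  fix w assume w: "w \<in> supp (\<lambda>w. ev x (\<lambda>v. G v w))"
  show "w \<in> (\<Union>v\<in>supp x. supp (G v))"
  proof (rule ccontr)
    assume "w \<notin> (\<Union>v\<in>supp x. supp (G v))"
    hence "ev x (\<lambda>v. G v w) = 0" unfolding ev_def by (intro sum.neutral) (auto simp: supp_def)
    thus False using w by (simp add: supp_def)
  qed
qed

lemma fin_lincomb:
  assumes "fin x" "\<And>v. v \<in> supp x \<Longrightarrow> fin (G v)"
  shows "fin (\<lambda>w. ev x (\<lambda>v. G v w))"
proof -
  have "supp (\<lambda>w. ev x (\<lambda>v. G v w)) \<subseteq> (\<Union>v\<in>supp x. supp (G v))"
    by (rule supp_lincomb)
  thus ?thesis using assms by (meson finite_UN_I finite_subset)
qed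

lemma ev_lincomb:
  assumes fx: "fin x" and fG: "\<And>v. v \<in> supp x \<Longrightarrow> fin (G v)"
  shows "ev (\<lambda>w. ev x (\<lambda>v. G v w)) \<Phi> = ev x (\<lambda>v. ev (G v) \<Phi>)"
proof -
  let ?U = "\<Union>v\<in>supp x. supp (G v)"
  have fU: "finite ?U" using fx fG by blast
  have sub: "supp (\<lambda>w. ev x (\<lambda>v. G v w)) \<subseteq> ?U"
    by (rule supp_lincomb)
  have "ev (\<lambda>w. ev x (\<lambda>v. G v w)) \<Phi> = (\<Sum>w\<in>?U. ev x (\<lambda>v. G v w) *\<^sub>R \<Phi> w)"
    by (rule ev_superset[OF fU sub])
  also have "\<dots> = ev x (\<lambda>v. \<Sum>w\<in>?U. G v w *\<^sub>R \<Phi> w)"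
    by (simp add: ev_def scaleR_sum_left sum.swap[of _ ?U] scaleR_sum_right)
  also have "\<dots> = ev x (\<lambda>v. ev (G v) \<Phi>)"
    by (rule ev_cong, rule ev_superset[symmetric]) (use fU in auto)
  finally show ?thesis .
qed


lemma conc_ev: "fin x \<Longrightarrow> fin y \<Longrightarrow> conc x y w = ev x (\<lambda>v. ev y (\<lambda>u. word (v @ u) w))"
  using ev_conc[of x y "\<lambda>w'. word w' w"] ev_recon[OF fin_conc] by metis

lemma conc_assoc: assumes "fin x" "fin y" "fin z"
  shows "conc (conc x y) z = conc x (conc y z)"
proof
  fix w
  have "conc (conc x y) z w = ev x (\<lambda>v. ev y (\<lambda>u'. ev z (\<lambda>u. word ((v @ u') @ u) w)))"
    using assms by (simp add: conc_ev fin_conc ev_conc)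
  also have "\<dots> = conc x (conc y z) w"
    using assms by (simp add: conc_ev[of x "conc y z"] fin_conc ev_conc)
  finally show "conc (conc x y) z w = conc x (conc y z) w" .
qed

lemma conc_nil_left: "fin x \<Longrightarrow> conc (word []) x = x"
  by (rule ext) (simp add: conc_ev fin_word ev_word ev_recon)

lemma conc_nil_right: "fin x \<Longrightarrow> conc x (word []) = x"
  by (rule ext) (simp add: conc_ev fin_word ev_word ev_recon)

lemma conc_word: "conc (word v) (word u) = word (v @ u)"
  by (rule ext) (simp add: conc_ev fin_word ev_word)

lemma supp_diff1: "supp (\<lambda>w. A w - B w) \<subseteq> supp A \<union> supp B" by (auto simp: supp_def)
lemma fin_diff1: "fin A \<Longrightarrow> fin B \<Longrightarrow> fin (\<lambda>w. A w - B w)"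
  by (rule finite_subset[OF supp_diff1]) simp

lemma ev_diff1: assumes "fin A" "fin B" shows "ev (\<lambda>w. A w - B w) \<Phi> = ev A \<Phi> - ev B \<Phi>"
proof -
  let ?U = "supp A \<union> supp B"
  have f: "finite ?U" using assms by simp
  have "ev (\<lambda>w. A w - B w) \<Phi> = (\<Sum>w\<in>?U. (A w - B w) *\<^sub>R \<Phi> w)"
    by (rule ev_superset[OF f supp_diff1])
  also have "\<dots> = (\<Sum>w\<in>?U. A w *\<^sub>R \<Phi> w) - (\<Sum>w\<in>?U. B w *\<^sub>R \<Phi> w)"
    by (simp add: scaleR_diff_left sum_subtractf)
  also have "\<dots> = ev A \<Phi> - ev B \<Phi>"
    by (subst (1 2) ev_superset[OF f]) auto
  finally show ?thesis .
qed

lemma fin_commutator: "fin x \<Longrightarrow> fin y \<Longrightarrow> fin (commutator x y)"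
  unfolding commutator_def by (intro fin_diff1 fin_conc)

abbreviation MW where "MW \<equiv> mult_ext_word"

lemma MW_Nil[simp]: "MW L [] = word []" by (simp add: mult_ext_word_def)
lemma MW_Cons[simp]: "MW L (a # v) = conc (L a) (MW L v)" by (simp add: mult_ext_word_def)

lemma fin_MW: "(\<And>a. fin (L a)) \<Longrightarrow> fin (MW L v)"
  by (induction v) (auto simp: fin_word fin_conc)

lemma MW_append: "(\<And>a. fin (L a)) \<Longrightarrow> MW L (v @ u) = conc (MW L v) (MW L u)"
  by (induction v) (auto simp: conc_nil_left fin_MW conc_assoc)

lemma mult_ext_ev: "mult_ext L x w = ev x (\<lambda>v. MW L v w)"
  by (simp add: mult_ext_def ev_def supp_def)

lemma mult_ext_ev': "mult_ext L x = (\<lambda>w. ev x (\<lambda>v. MW L v w))"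
  by (simp add: mult_ext_ev fun_eq_iff)

lemma fin_mult_ext: "fin x \<Longrightarrow> (\<And>a. fin (L a)) \<Longrightarrow> fin (mult_ext L x)"
  unfolding mult_ext_ev' by (rule fin_lincomb) (auto intro: fin_MW)

lemma ev_mult_ext: "fin x \<Longrightarrow> (\<And>a. fin (L a)) \<Longrightarrow> ev (mult_ext L x) \<Phi> = ev x (\<lambda>v. ev (MW L v) \<Phi>)"
  unfolding mult_ext_ev' by (rule ev_lincomb) (auto intro: fin_MW)

lemma mult_ext_word: "mult_ext L (word v) = MW L v"
  by (simp add: mult_ext_ev' ev_word)

lemma mult_ext_tadd: assumes "fin x" "fin y" shows "mult_ext L (tadd x y) = tadd (mult_ext L x) (mult_ext L y)"
proof
  fix w
  have "mult_ext L (tadd x y) w = ev x (\<lambda>v. MW L v w) + ev y (\<lambda>v. MW L v w)"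
    by (simp only: mult_ext_ev ev_tadd[OF assms])
  thus "mult_ext L (tadd x y) w = tadd (mult_ext L x) (mult_ext L y) w" by (simp add: tadd_def mult_ext_ev)
qed

lemma mult_ext_tscale: assumes "fin x" shows "mult_ext L (tscale c x) = tscale c (mult_ext L x)"
proof
  fix w
  have "mult_ext L (tscale c x) w = c *\<^sub>R ev x (\<lambda>v. MW L v w)"
    by (simp only: mult_ext_ev ev_tscale[OF assms])
  thus "mult_ext L (tscale c x) w = tscale c (mult_ext L x) w" by (simp add: tscale_def mult_ext_ev)
qed

lemma mult_ext_diff: "fin x \<Longrightarrow> fin y \<Longrightarrow> mult_ext L (\<lambda>w. x w - y w) = (\<lambda>w. mult_ext L x w - mult_ext L y w)"
  by (simp add: mult_ext_ev' ev_diff1)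

lemma mult_ext_conc: assumes fx: "fin x" and fy: "fin y" and fL: "\<And>a. fin (L a)"
  shows "mult_ext L (conc x y) = conc (mult_ext L x) (mult_ext L y)"
proof
  fix w
  have fM: "fin (MW L v)" for v by (rule fin_MW[OF fL])
  have "mult_ext L (conc x y) w = ev x (\<lambda>v. ev y (\<lambda>u. conc (MW L v) (MW L u) w))"
    by (simp add: mult_ext_ev ev_conc fx fy MW_append fL)
  also have "\<dots> = ev x (\<lambda>v. ev (MW L v) (\<lambda>v'. ev y (\<lambda>u. ev (MW L u) (\<lambda>u'. word (v' @ u') w))))"
    by (simp add: conc_ev fM ev_ev_swap[of "MW L _" y])
  also have "\<dots> = conc (mult_ext L x) (mult_ext L y) w"
    by (simp add: conc_ev fin_mult_ext fx fy fL ev_mult_ext)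
  finally show "mult_ext L (conc x y) w = conc (mult_ext L x) (mult_ext L y) w" .
qed

lemma mult_ext_commutator: assumes "fin x" "fin y" "\<And>a. fin (L a)"
  shows "mult_ext L (commutator x y) = commutator (mult_ext L x) (mult_ext L y)"
  unfolding commutator_def using assms
  by (simp add: mult_ext_diff fin_conc mult_ext_conc)

lemma mult_ext_MW: assumes fL: "\<And>a. fin (L a)" and fM: "\<And>a. fin (M a)"
  shows "mult_ext L (MW M v) = MW (\<lambda>a. mult_ext L (M a)) v"
proof (induction v)
  case Nil thus ?case by (simp add: mult_ext_word)
next
  case (Cons a v) thus ?case
    by (simp add: mult_ext_conc fL fM fin_MW)
qed

lemma mult_ext_comp: assumes fx: "fin x" and fL: "\<And>a. fin (L a)" and fM: "\<And>a. fin (M a)"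
  shows "mult_ext L (mult_ext M x) = mult_ext (\<lambda>a. mult_ext L (M a)) x"
proof
  fix w
  have "mult_ext L (mult_ext M x) w = ev x (\<lambda>v. ev (MW M v) (\<lambda>v'. MW L v' w))"
    by (simp add: mult_ext_ev ev_mult_ext fx fM)
  also have "\<dots> = ev x (\<lambda>v. mult_ext L (MW M v) w)"
    by (simp add: mult_ext_ev)
  also have "\<dots> = mult_ext (\<lambda>a. mult_ext L (M a)) x w"
    by (simp add: mult_ext_MW fL fM mult_ext_ev)
  finally show "mult_ext L (mult_ext M x) w = mult_ext (\<lambda>a. mult_ext L (M a)) x w" .
qed

lemma MW_word: "MW (\<lambda>a. word [a]) v = word v"
  by (induction v) (auto simp: conc_word)

lemma mult_ext_unit: "fin x \<Longrightarrow> mult_ext (\<lambda>a. word [a]) x = x"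
  by (simp add: mult_ext_ev' MW_word ev_recon)


definition EE :: "real fps" where "EE = fps_exp 1 - 1"
definition NN :: "nat \<Rightarrow> nat \<Rightarrow> real" where "NN n m = fps_nth (EE ^ n) m"

lemma EE_nth: "fps_nth EE i = (if i = 0 then 0 else 1 / fact i)"
  by (simp add: EE_def)

lemma NN_Suc: "NN (Suc n) m = (\<Sum>i\<le>m. fps_nth EE i * NN n (m - i))"
  by (simp add: NN_def fps_mult_nth atLeast0AtMost)

lemma NN_0: "NN 0 m = (if m = 0 then 1 else 0)"
  by (simp add: NN_def)

lemma NN_1: "NN 1 m = fps_nth EE m"
  by (simp add: NN_def)

lemma NN_vanish: "m < n \<Longrightarrow> NN n m = 0"
proof (induction n arbitrary: m)
  case 0 thus ?case by simp
next
  case (Suc n)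
  have "fps_nth EE i * NN n (m - i) = 0" if "i \<le> m" for i
    using Suc that by (cases "i = 0") (auto simp: EE_nth)
  thus ?case unfolding NN_Suc by (intro sum.neutral) simp
qed

lemma ln_exp_identity:
  assumes m: "m \<ge> 1"
  shows "(\<Sum>n=1..m. ((-1) ^ (n - 1) / real n) * NN n m) = (if m = 1 then 1 else 0)"
proof -
  have e0: "fps_nth EE 0 = 0" and e1: "fps_nth EE 1 \<noteq> 0" by (simp_all add: EE_nth)
  have "fps_ln (1::real) oo EE = fps_X"
    using fps_inv[OF e0 e1] by (simp add: fps_ln_fps_exp_inv EE_def)
  hence "fps_nth (fps_ln (1::real) oo EE) m = (if m = 1 then 1 else 0)" by (simp add: fps_X_nth)
  moreover have "fps_nth (fps_ln (1::real) oo EE) m = (\<Sum>n=0..m. fps_nth (fps_ln 1) n * NN n m)"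
    by (simp add: fps_compose_nth NN_def)
  moreover have "(\<Sum>n=0..m. fps_nth (fps_ln (1::real)) n * NN n m) = (\<Sum>n=1..m. ((-1) ^ (n - 1) / real n) * NN n m)"
    by (subst sum.atLeast_Suc_atMost) (auto simp: fps_ln_nth intro!: sum.cong)
  ultimately show ?thesis by simp
qed


definition obr :: "('a \<Rightarrow> 'a \<Rightarrow> 'a option) \<Rightarrow> 'a option \<Rightarrow> 'a option \<Rightarrow> 'a option" where
  "obr br x y = (case x of None \<Rightarrow> None | Some b \<Rightarrow> (case y of None \<Rightarrow> None | Some c \<Rightarrow> br b c))"

lemma obr_simps[simp]: "obr br None y = None" "obr br x None = None" "obr br (Some b) (Some c) = br b c"
  by (auto simp: obr_def split: option.splits)

lemma obr_assoc: assumes "bracket_assoc br" shows "obr br x (obr br y z) = obr br (obr br x y) z"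
proof (cases x; cases y; cases z)
  fix a b c assume "x = Some a" "y = Some b" "z = Some c"
  moreover have "(case br a b of None \<Rightarrow> None | Some d \<Rightarrow> br d c) = (case br b c of None \<Rightarrow> None | Some d \<Rightarrow> br a d)"
    using assms unfolding bracket_assoc_def by blast
  ultimately show ?thesis by (auto simp: obr_def split: option.splits)
qed auto

lemma ibr_Cons: "v \<noteq> [] \<Longrightarrow> ibr br (a # v) = obr br (Some a) (ibr br v)"
  by (cases v) (auto simp: obr_def)

lemma ibr_append: assumes as: "bracket_assoc br"
  shows "v1 \<noteq> [] \<Longrightarrow> v2 \<noteq> [] \<Longrightarrow> ibr br (v1 @ v2) = obr br (ibr br v1) (ibr br v2)"
proof (induction v1)
  case Nil thus ?case by simp
next
  case (Cons a v1)
  show ?case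
  proof (cases "v1 = []")
    case True thus ?thesis using Cons by (simp add: ibr_Cons)
  next
    case False
    have "ibr br ((a # v1) @ v2) = obr br (Some a) (ibr br (v1 @ v2))"
      using Cons False by (simp add: ibr_Cons)
    also have "\<dots> = obr br (Some a) (obr br (ibr br v1) (ibr br v2))" using Cons False by simp
    also have "\<dots> = obr br (ibr br (a # v1)) (ibr br v2)"
      using False by (simp add: obr_assoc[OF as] ibr_Cons)
    finally show ?thesis .
  qed
qed

lemma ibr_nonempty: "ibr br w = Some a \<Longrightarrow> w \<noteq> []" by auto

lemma ibr_weight: assumes wok: "weight_ok br \<omega>"
  shows "ibr br w = Some a \<Longrightarrow> sum_list (map \<omega> w) = \<omega> a"
proof (induction w arbitrary: a)
  case Nil thus ?case by simp
next
  case (Cons b v)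
  show ?case
  proof (cases "v = []")
    case True thus ?thesis using Cons by simp
  next
    case False
    then obtain c where c: "ibr br v = Some c" "br b c = Some a"
      using Cons.prems by (cases "ibr br v") (auto simp: ibr_Cons)
    thus ?thesis using Cons.IH[OF c(1)] wok unfolding weight_ok_def by simp
  qed
qed

lemma len_le_weight: "(\<forall>x\<in>set w. 1 \<le> \<omega> x) \<Longrightarrow> length w \<le> sum_list (map \<omega> w)"
  by (induction w) auto

lemma mem_le_weight: "b \<in> set w \<Longrightarrow> \<omega> b \<le> sum_list (map (\<omega>::'a \<Rightarrow> nat) w)"
  by (induction w) auto

lemma fin_weight_le: assumes "weight_ok br \<omega>" shows "finite {b. \<omega> b \<le> n}"
proof -
  have "{b. \<omega> b \<le> n} = (\<Union>k\<le>n. {b. \<omega> b = k})" by auto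
  thus ?thesis using assms unfolding weight_ok_def by simp
qed

definition Wall where "Wall br a = {w. ibr br w = Some a}"

lemma Wall_bound: assumes wok: "weight_ok br \<omega>" and w: "w \<in> Wall br a"
  shows "length w \<le> \<omega> a" "set w \<subseteq> {b. \<omega> b \<le> \<omega> a}" "1 \<le> length w"
proof -
  have s: "sum_list (map \<omega> w) = \<omega> a" using ibr_weight[OF wok] w by (simp add: Wall_def)
  have "\<forall>x\<in>set w. 1 \<le> \<omega> x" using wok by (simp add: weight_ok_def)
  thus "length w \<le> \<omega> a" using len_le_weight s by metis
  show "set w \<subseteq> {b. \<omega> b \<le> \<omega> a}"
  proof
    fix b assume "b \<in> set w"
    hence "\<omega> b \<le> sum_list (map \<omega> w)" by (rule mem_le_weight)
    thus "b \<in> {b. \<omega> b \<le> \<omega> a}" using s by simp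
  qed
  show "1 \<le> length w" using w by (cases w) (auto simp: Wall_def)
qed

lemma fin_Wall: assumes wok: "weight_ok br \<omega>" shows "finite (Wall br a)"
proof (rule finite_subset)
  show "Wall br a \<subseteq> {xs. set xs \<subseteq> {b. \<omega> b \<le> \<omega> a} \<and> length xs \<le> \<omega> a}"
    using Wall_bound[OF wok] by blast
  show "finite {xs. set xs \<subseteq> {b. \<omega> b \<le> \<omega> a} \<and> length xs \<le> \<omega> a}"
    by (rule finite_lists_length_le[OF fin_weight_le[OF wok]])
qed

lemma fin_phiL: "weight_ok br \<omega> \<Longrightarrow> fin (phiL br a)"
  by (rule finite_subset[OF _ fin_Wall]) (auto simp: supp_def phiL_def Wall_def split: if_splits)

lemma fin_psiL: "weight_ok br \<omega> \<Longrightarrow> fin (psiL br a)"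
  by (rule finite_subset[OF _ fin_Wall]) (auto simp: supp_def psiL_def Wall_def split: if_splits)

definition Wn where "Wn br n a = {w. length w = n \<and> ibr br w = Some a}"

lemma fin_Wn: "weight_ok br \<omega> \<Longrightarrow> finite (Wn br n a)"
  by (rule finite_subset[OF _ fin_Wall]) (auto simp: Wn_def Wall_def)


lemma phiL_val: "phiL br b t = (if ibr br t = Some b then 1 / fact (length t) else 0)"
  by (simp add: phiL_def)

lemma Wn_1: "Wn br (Suc 0) a = {[a]}"
  by (auto simp: Wn_def length_Suc_conv)

lemma per_i:
  assumes as: "bracket_assoc br" and wok: "weight_ok br \<omega>"
    and IH: "\<And>c v. (\<Sum>w\<in>Wn br (Suc k) c. MW (phiL br) w v) = (if ibr br v = Some c then NN (Suc k) (length v) else 0)"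
    and i: "i \<le> length u"
  shows "(\<Sum>w\<in>Wn br (Suc (Suc k)) a. phiL br (hd w) (take i u) * MW (phiL br) (tl w) (drop i u))
       = (if ibr br u = Some a then fps_nth EE i * NN (Suc k) (length u - i) else 0)"
proof -
  let ?t = "take i u" and ?d = "drop i u" and ?W = "Wn br (Suc (Suc k)) a"
  have ud: "u = ?t @ ?d" by simp
  show ?thesis
  proof (cases "ibr br ?t")
    case None
    have "(\<Sum>w\<in>?W. phiL br (hd w) ?t * MW (phiL br) (tl w) ?d) = 0"
      by (intro sum.neutral) (simp add: phiL_val None)
    moreover have "fps_nth EE i * NN (Suc k) (length u - i) = 0" if ua: "ibr br u = Some a"
    proof (cases "?t = []")
      case True
      hence "i = 0" using i ua by (cases u) auto
      thus ?thesis by (simp add: EE_nth)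
    next
      case tne: False
      show ?thesis
      proof (cases "?d = []")
        case True
        hence "length u - i = 0" by simp
        thus ?thesis by (simp add: NN_vanish)
      next
        case False
        have "ibr br u = obr br (ibr br ?t) (ibr br ?d)"
          by (subst ud, rule ibr_append[OF as tne False])
        thus ?thesis using None ua by simp
      qed
    qed
    ultimately show ?thesis by simp
  next
    case (Some b0)
    have tne: "?t \<noteq> []" using Some by (metis ibr.simps(1) option.distinct(1))
    have ipos: "i \<ge> 1" using tne by (cases "i = 0") auto
    have lt: "length ?t = i" using i by simp
    let ?V = "{w'. length w' = Suc k \<and> ibr br (b0 # w') = Some a}"
    have "(\<Sum>w\<in>?W. phiL br (hd w) ?t * MW (phiL br) (tl w) ?d)
        = (\<Sum>w\<in>{w\<in>?W. hd w = b0}. (1 / fact i) * MW (phiL br) (tl w) ?d)"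
    proof (rule sum.mono_neutral_cong_right)
      show "finite ?W" by (rule fin_Wn[OF wok])
    qed (use i in \<open>auto simp: phiL_val Some min_absorb2\<close>)
    also have "{w\<in>?W. hd w = b0} = (\<lambda>w'. b0 # w') ` ?V"
    proof (rule set_eqI, rule iffI)
      fix w assume "w \<in> {w\<in>?W. hd w = b0}"
      then obtain w' where "w = b0 # w'" "w' \<in> ?V" by (cases w) (auto simp: Wn_def)
      thus "w \<in> (\<lambda>w'. b0 # w') ` ?V" by blast
    qed (auto simp: Wn_def)
    also have "(\<Sum>w\<in>(\<lambda>w'. b0 # w') ` ?V. (1 / fact i) * MW (phiL br) (tl w) ?d)
             = (1 / fact i) * (\<Sum>w'\<in>?V. MW (phiL br) w' ?d)"
      by (subst sum.reindex) (auto simp: inj_on_def sum_distrib_left)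
    also have "?V = (\<Union>c\<in>{c. br b0 c = Some a}. Wn br (Suc k) c)"
    proof (rule set_eqI, rule iffI)
      fix w' assume w': "w' \<in> ?V"
      hence ne: "w' \<noteq> []" by auto
      then obtain c where "ibr br w' = Some c" "br b0 c = Some a"
        using w' by (cases "ibr br w'") (auto simp: ibr_Cons)
      thus "w' \<in> (\<Union>c\<in>{c. br b0 c = Some a}. Wn br (Suc k) c)" using w' by (auto simp: Wn_def)
    next
      fix w' assume "w' \<in> (\<Union>c\<in>{c. br b0 c = Some a}. Wn br (Suc k) c)"
      then obtain c where c: "br b0 c = Some a" "length w' = Suc k" "ibr br w' = Some c"
        by (auto simp: Wn_def)
      hence "w' \<noteq> []" by auto
      thus "w' \<in> ?V" using c by (simp add: ibr_Cons)
    qed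
    also have finC: "finite {c. br b0 c = Some a}"
    proof (rule finite_subset[OF _ fin_weight_le[OF wok, of "\<omega> a"]])
      show "{c. br b0 c = Some a} \<subseteq> {c. \<omega> c \<le> \<omega> a}" using wok by (auto simp: weight_ok_def)
    qed
    have "(\<Sum>w'\<in>(\<Union>c\<in>{c. br b0 c = Some a}. Wn br (Suc k) c). MW (phiL br) w' ?d)
         = (\<Sum>c\<in>{c. br b0 c = Some a}. \<Sum>w'\<in>Wn br (Suc k) c. MW (phiL br) w' ?d)"
      by (rule sum.UNION_disjoint[OF finC]) (auto simp: fin_Wn[OF wok], auto simp: Wn_def)
    also have "\<dots> = (\<Sum>c\<in>{c. br b0 c = Some a}. if ibr br ?d = Some c then NN (Suc k) (length ?d) else 0)"
      by (simp add: IH)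
    also have "\<dots> = (if obr br (Some b0) (ibr br ?d) = Some a then NN (Suc k) (length ?d) else 0)"
    proof (cases "ibr br ?d")
      case None thus ?thesis by simp
    next
      case (Some c0)
      have "(\<Sum>c\<in>{c. br b0 c = Some a}. if ibr br ?d = Some c then NN (Suc k) (length ?d) else 0)
          = (\<Sum>c\<in>{c. br b0 c = Some a}. if c0 = c then NN (Suc k) (length ?d) else 0)"
        using Some by (intro sum.cong) auto
      also have "\<dots> = (if c0 \<in> {c. br b0 c = Some a} then NN (Suc k) (length ?d) else 0)"
        by (rule sum.delta'[OF finC])
      finally show ?thesis using Some by simp
    qed
    finally have main: "(\<Sum>w\<in>?W. phiL br (hd w) ?t * MW (phiL br) (tl w) ?d)
       = (1 / fact i) * (if obr br (Some b0) (ibr br ?d) = Some a then NN (Suc k) (length ?d) else 0)" .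
    show ?thesis
    proof (cases "?d = []")
      case True
      hence "length u - i = 0" by simp
      thus ?thesis using main True by (simp add: NN_vanish)
    next
      case False
      have "ibr br u = obr br (ibr br ?t) (ibr br ?d)"
        by (subst ud, rule ibr_append[OF as tne False])
      thus ?thesis using main Some ipos by (simp add: EE_nth)
    qed
  qed
qed

lemma sumW:
  assumes as: "bracket_assoc br" and wok: "weight_ok br \<omega>"
  shows "(\<Sum>w\<in>Wn br (Suc k) a. MW (phiL br) w u) = (if ibr br u = Some a then NN (Suc k) (length u) else 0)"
proof (induction k arbitrary: a u)
  case 0
  have b: "(\<Sum>w\<in>Wn br (Suc 0) a. MW (phiL br) w u) = phiL br a u"
    by (simp add: Wn_1 conc_nil_right fin_phiL[OF wok])
  moreover have "ibr br u = Some a \<Longrightarrow> u \<noteq> []" by auto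
  hence v: "phiL br a u = (if ibr br u = Some a then NN (Suc 0) (length u) else 0)"
    by (auto simp: phiL_val NN_1[unfolded One_nat_def] EE_nth)
  show ?case by (simp only: b v)
next
  case (Suc k)
  let ?W = "Wn br (Suc (Suc k)) a"
  have "(\<Sum>w\<in>?W. MW (phiL br) w u) = (\<Sum>w\<in>?W. \<Sum>i\<le>length u. phiL br (hd w) (take i u) * MW (phiL br) (tl w) (drop i u))"
  proof (rule sum.cong[OF refl])
    fix w assume "w \<in> ?W"
    then obtain b w' where "w = b # w'" by (cases w) (auto simp: Wn_def)
    thus "MW (phiL br) w u = (\<Sum>i\<le>length u. phiL br (hd w) (take i u) * MW (phiL br) (tl w) (drop i u))"
      by (simp add: conc_def)
  qed
  also have "\<dots> = (\<Sum>i\<le>length u. \<Sum>w\<in>?W. phiL br (hd w) (take i u) * MW (phiL br) (tl w) (drop i u))"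
    by (rule sum.swap)
  also have "\<dots> = (\<Sum>i\<le>length u. if ibr br u = Some a then fps_nth EE i * NN (Suc k) (length u - i) else 0)"
    by (intro sum.cong refl per_i[OF as wok Suc.IH]) simp
  also have "\<dots> = (if ibr br u = Some a then NN (Suc (Suc k)) (length u) else 0)"
    by (simp add: NN_Suc[of "Suc k"])
  finally show ?case .
qed

lemma phi_psi:
  assumes as: "bracket_assoc br" and wok: "weight_ok br \<omega>"
  shows "mult_ext (phiL br) (psiL br a) = word [a]"
proof
  fix u
  let ?c = "\<lambda>n::nat. (-1) ^ (n - 1) / real n"
  have fW: "finite (Wall br a)" by (rule fin_Wall[OF wok])
  have "mult_ext (phiL br) (psiL br a) u = (\<Sum>w\<in>Wall br a. psiL br a w * MW (phiL br) w u)"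
    unfolding mult_ext_ev by (subst ev_superset[OF fW]) (auto simp: supp_def psiL_def Wall_def split: if_splits)
  also have "Wall br a = (\<Union>n\<in>{1..\<omega> a}. Wn br n a)"
    using Wall_bound[OF wok] by (auto simp: Wall_def Wn_def)
  also have "(\<Sum>w\<in>(\<Union>n\<in>{1..\<omega> a}. Wn br n a). psiL br a w * MW (phiL br) w u)
      = (\<Sum>n\<in>{1..\<omega> a}. \<Sum>w\<in>Wn br n a. psiL br a w * MW (phiL br) w u)"
    by (rule sum.UNION_disjoint) (auto simp: fin_Wn[OF wok], auto simp: Wn_def)
  also have "\<dots> = (\<Sum>n\<in>{1..\<omega> a}. ?c n * (\<Sum>w\<in>Wn br n a. MW (phiL br) w u))"
    by (intro sum.cong refl) (auto simp: sum_distrib_left psiL_def Wn_def intro!: sum.cong)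
  also have "\<dots> = (\<Sum>n\<in>{1..\<omega> a}. ?c n * (if ibr br u = Some a then NN n (length u) else 0))"
  proof (intro sum.cong refl)
    fix n assume "n \<in> {1..\<omega> a}"
    then obtain k where "n = Suc k" by (cases n) auto
    thus "?c n * (\<Sum>w\<in>Wn br n a. MW (phiL br) w u) = ?c n * (if ibr br u = Some a then NN n (length u) else 0)"
      using sumW[OF as wok] by simp
  qed
  also have "\<dots> = word [a] u"
  proof (cases "ibr br u = Some a")
    case False
    hence "u \<noteq> [a]" by auto
    thus ?thesis using False by (simp add: word_def)
  next
    case True
    have ub: "length u \<le> \<omega> a" "1 \<le> length u" using Wall_bound[OF wok, of u a] True by (auto simp: Wall_def)
    have "(\<Sum>n\<in>{1..\<omega> a}. ?c n * NN n (length u)) = (\<Sum>n\<in>{1..length u}. ?c n * NN n (length u))"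
      by (rule sum.mono_neutral_right) (use ub in \<open>auto simp: NN_vanish\<close>)
    also have "\<dots> = (if length u = 1 then 1 else 0)" by (rule ln_exp_identity[OF ub(2)])
    also have "\<dots> = word [a] u"
    proof (cases "length u = 1")
      case True
      then obtain b where "u = [b]" by (auto simp: length_Suc_conv)
      thus ?thesis using \<open>ibr br u = Some a\<close> by (simp add: word_def)
    qed (auto simp: word_def)
    finally show ?thesis using True by simp
  qed
  finally show "mult_ext (phiL br) (psiL br a) u = word [a] u" .
qed



fun opw :: "('a \<Rightarrow> real^'e \<Rightarrow> real^'e) \<Rightarrow> 'a list \<Rightarrow> (real^'e \<Rightarrow> real^'e) \<Rightarrow> (real^'e \<Rightarrow> real^'e)" where
  "opw F [] k = k"
| "opw F (a # u) k = vf_act (F a) (opw F u k)"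

lemma vf_act_id: "vf_act g id = g"
proof -
  have "frechet_derivative id (at x) = id" for x :: "real^'e"
    by (rule fd_eq) (simp add: id_def)
  thus ?thesis by (simp add: vf_act_def fun_eq_iff)
qed

lemma fW_opw: "fW F v = opw F v id"
  by (induction F v rule: fW.induct) (auto simp: vf_act_id vf_act_id[unfolded id_def])

lemma smooth_opw: "(\<And>a. smooth_vf (F a)) \<Longrightarrow> smooth_vf k \<Longrightarrow> smooth_vf (opw F v k)"
  by (induction v) (auto intro: smooth_vf_act)

lemma opw_append: "opw F (v @ u) k = opw F v (opw F u k)"
  by (induction v) auto

lemma smooth_ev: "(\<And>v. smooth_vf (K v)) \<Longrightarrow> smooth_vf (\<lambda>p. ev x (\<lambda>v. K v p))"
  unfolding ev_def by (intro smooth_sum smooth_scale) auto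

lemma vf_act_lin1:
  assumes k: "smooth_vf k"
  shows "vf_act (\<lambda>p. ev x (\<lambda>v. G v p)) k = (\<lambda>p. ev x (\<lambda>v. vf_act (G v) k p))"
proof
  fix p
  have bl: "bounded_linear (frechet_derivative k (at p))"
    using fd_works[OF smooth_diff[OF k]] has_derivative_bounded_linear by blast
  show "vf_act (\<lambda>p. ev x (\<lambda>v. G v p)) k p = ev x (\<lambda>v. vf_act (G v) k p)"
    unfolding vf_act_def using ev_blin[OF bl, of x "\<lambda>v. G v p"] by simp
qed

lemma vf_act_add1: assumes k: "smooth_vf k"
  shows "vf_act (\<lambda>p. g1 p + g2 p) k = (\<lambda>p. vf_act g1 k p + vf_act g2 k p)"
  by (rule ext) (simp add: vf_act_def linear_add[OF fd_linear[OF smooth_diff[OF k]]])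

lemma vf_act_scale1: assumes k: "smooth_vf k"
  shows "vf_act (\<lambda>p. c *\<^sub>R g p) k = (\<lambda>p. c *\<^sub>R vf_act g k p)"
  by (rule ext) (simp add: vf_act_def linear_scale[OF fd_linear[OF smooth_diff[OF k]]])

lemma vf_act_lin2:
  assumes K: "\<And>v. smooth_vf (K v)"
  shows "vf_act g (\<lambda>q. ev x (\<lambda>v. K v q)) = (\<lambda>p. ev x (\<lambda>v. vf_act g (K v) p))"
proof
  fix p
  have "((\<lambda>q. ev x (\<lambda>v. K v q)) has_derivative (\<lambda>y. ev x (\<lambda>v. frechet_derivative (K v) (at p) y))) (at p)"
    unfolding ev_def
    by (intro has_derivative_sum has_derivative_scaleR_right fd_works smooth_diff K)
  hence "frechet_derivative (\<lambda>q. ev x (\<lambda>v. K v q)) (at p) = (\<lambda>y. ev x (\<lambda>v. frechet_derivative (K v) (at p) y))"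
    by (rule fd_eq)
  thus "vf_act g (\<lambda>q. ev x (\<lambda>v. K v q)) p = ev x (\<lambda>v. vf_act g (K v) p)"
    by (simp add: vf_act_def)
qed

lemma opw_lin:
  assumes F: "\<And>a. smooth_vf (F a)" and K: "\<And>v. smooth_vf (K v)"
  shows "opw F u (\<lambda>q. ev x (\<lambda>v. K v q)) = (\<lambda>p. ev x (\<lambda>v. opw F u (K v) p))"
proof (induction u)
  case Nil thus ?case by simp
next
  case (Cons a u)
  have "opw F (a # u) (\<lambda>q. ev x (\<lambda>v. K v q)) = vf_act (F a) (\<lambda>p. ev x (\<lambda>v. opw F u (K v) p))"
    using Cons by simp
  also have "\<dots> = (\<lambda>p. ev x (\<lambda>v. vf_act (F a) (opw F u (K v)) p))"
    by (rule vf_act_lin2) (intro smooth_opw F K)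
  finally show ?case by simp
qed

definition OpT where "OpT F x k = (\<lambda>p. ev x (\<lambda>v. opw F v k p))"

lemma fT_OpT: "fT F x = OpT F x id"
  by (simp add: fT_def OpT_def ev_def supp_def fW_opw)

lemma fT_ev: "fT F x = (\<lambda>p. ev x (\<lambda>v. fW F v p))"
  by (simp add: fT_def ev_def supp_def)

lemma smooth_OpT: "(\<And>a. smooth_vf (F a)) \<Longrightarrow> smooth_vf k \<Longrightarrow> smooth_vf (OpT F x k)"
  unfolding OpT_def by (intro smooth_ev smooth_opw)

lemma smooth_fT: "(\<And>a. smooth_vf (F a)) \<Longrightarrow> smooth_vf (fT F x)"
  unfolding fT_OpT by (intro smooth_OpT smooth_id)

lemma OpT_conc:
  assumes F: "\<And>a. smooth_vf (F a)" and k: "smooth_vf k" and fx: "fin x" and fy: "fin y"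
  shows "OpT F (conc x y) k = OpT F x (OpT F y k)"
proof
  fix p
  have "OpT F (conc x y) k p = ev x (\<lambda>v. ev y (\<lambda>u. opw F v (opw F u k) p))"
    by (simp add: OpT_def ev_conc[OF fx fy] opw_append)
  also have "\<dots> = OpT F x (OpT F y k) p"
    unfolding OpT_def by (subst opw_lin) (auto intro: smooth_opw F k)
  finally show "OpT F (conc x y) k p = OpT F x (OpT F y k) p" .
qed

lemma OpT_tadd: "fin x \<Longrightarrow> fin y \<Longrightarrow> OpT F (tadd x y) k = (\<lambda>p. OpT F x k p + OpT F y k p)"
  by (simp add: OpT_def ev_tadd)

lemma OpT_tscale: "fin x \<Longrightarrow> OpT F (tscale c x) k = (\<lambda>p. c *\<^sub>R OpT F x k p)"
  by (simp add: OpT_def ev_tscale)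

lemma OpT_diff: "fin x \<Longrightarrow> fin y \<Longrightarrow> OpT F (\<lambda>w. x w - y w) k = (\<lambda>p. OpT F x k p - OpT F y k p)"
  by (simp add: OpT_def ev_diff1)

lemma OpT_word: "OpT F (word v) k = opw F v k"
  by (simp add: OpT_def ev_word)



lemma brk_step:
  assumes F: "\<And>a. smooth_vf (F a)" and fx: "fin x" and fy: "fin y"
    and hx: "\<forall>k. smooth_vf k \<longrightarrow> OpT F x k = vf_act (fT F x) k"
    and hy: "\<forall>k. smooth_vf k \<longrightarrow> OpT F y k = vf_act (fT F y) k"
    and k: "smooth_vf k"
  shows "OpT F (commutator x y) k = vf_act (vf_bracket (fT F x) (fT F y)) k"
proof -
  have sX: "smooth_vf (fT F x)" and sY: "smooth_vf (fT F y)" by (intro smooth_fT F)+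
  have "OpT F (commutator x y) k = (\<lambda>p. OpT F x (OpT F y k) p - OpT F y (OpT F x k) p)"
    unfolding commutator_def using fx fy k
    by (simp add: OpT_diff fin_conc OpT_conc F)
  also have "\<dots> = (\<lambda>p. vf_act (fT F x) (vf_act (fT F y) k) p - vf_act (fT F y) (vf_act (fT F x) k) p)"
    using hx hy k sX sY by (simp add: smooth_vf_act)
  also have "\<dots> = vf_act (vf_bracket (fT F x) (fT F y)) k"
    using comm_id[OF sX sY k] by (simp add: fun_eq_iff)
  finally show ?thesis .
qed



lemma fT_comm_step:
  assumes F: "\<And>a. smooth_vf (F a)" and fx: "fin x" and fy: "fin y"
    and hx: "\<forall>k. smooth_vf k \<longrightarrow> OpT F x k = vf_act (fT F x) k"
    and hy: "\<forall>k. smooth_vf k \<longrightarrow> OpT F y k = vf_act (fT F y) k"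
  shows "fT F (commutator x y) = vf_bracket (fT F x) (fT F y)"
  using brk_step[OF F fx fy hx hy smooth_id] unfolding fT_OpT[of F "commutator x y"] by (simp add: vf_act_id)



lemma LieA_main:
  fixes F :: "'a \<Rightarrow> real^'e \<Rightarrow> real^'e"
  assumes F: "\<And>a. smooth_vf (F a)"
  shows "x \<in> LieA \<Longrightarrow> fin x \<and> (\<forall>k. smooth_vf k \<longrightarrow> OpT F x k = vf_act (fT F x) k)"
proof (induction x rule: LieA.induct)
  case (gen a)
  have "fT F (word [a]) = F a" unfolding fT_OpT OpT_word by (simp add: vf_act_id)
  thus ?case unfolding OpT_word by (simp add: fin_word)
next
  case (add x y)
  have fx: "fin x" and fy: "fin y" using add.IH by blast+
  have e: "fT F (tadd x y) = (\<lambda>p. fT F x p + fT F y p)"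
    unfolding fT_OpT using fx fy by (rule OpT_tadd)
  show ?case
  proof (intro conjI allI impI)
    show "fin (tadd x y)" by (rule fin_tadd[OF fx fy])
    fix k :: "real^'e \<Rightarrow> real^'e" assume k: "smooth_vf k"
    have "OpT F x k = vf_act (fT F x) k" "OpT F y k = vf_act (fT F y) k" using add.IH k by blast+
    thus "OpT F (tadd x y) k = vf_act (fT F (tadd x y)) k"
      unfolding e OpT_tadd[OF fx fy] vf_act_add1[OF k] by simp
  qed
next
  case (scale x c)
  have fx: "fin x" using scale.IH by blast
  have e: "fT F (tscale c x) = (\<lambda>p. c *\<^sub>R fT F x p)"
    unfolding fT_OpT using fx by (rule OpT_tscale)
  show ?case
  proof (intro conjI allI impI)
    show "fin (tscale c x)" by (rule fin_tscale[OF fx])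
    fix k :: "real^'e \<Rightarrow> real^'e" assume k: "smooth_vf k"
    have "OpT F x k = vf_act (fT F x) k" using scale.IH k by blast
    thus "OpT F (tscale c x) k = vf_act (fT F (tscale c x)) k"
      unfolding e OpT_tscale[OF fx] vf_act_scale1[OF k] by simp
  qed
next
  case (brk x y)
  have fx: "fin x" and fy: "fin y" and hx: "\<forall>k. smooth_vf k \<longrightarrow> OpT F x k = vf_act (fT F x) k"
    and hy: "\<forall>k. smooth_vf k \<longrightarrow> OpT F y k = vf_act (fT F y) k" using brk.IH by blast+
  have e: "fT F (commutator x y) = vf_bracket (fT F x) (fT F y)" by (rule fT_comm_step[OF F fx fy hx hy])
  show ?case
  proof (intro conjI allI impI)
    show "fin (commutator x y)" by (rule fin_commutator[OF fx fy])
    fix k :: "real^'e \<Rightarrow> real^'e" assume k: "smooth_vf k"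
    show "OpT F (commutator x y) k = vf_act (fT F (commutator x y)) k"
      unfolding e by (rule brk_step[OF F fx fy hx hy k])
  qed
qed



lemma fT_commutator:
  fixes F :: "'a \<Rightarrow> real^'e \<Rightarrow> real^'e"
  assumes F: "\<And>a. smooth_vf (F a)" and x: "x \<in> LieA" and y: "y \<in> LieA"
  shows "fT F (commutator x y) = vf_bracket (fT F x) (fT F y)"
proof -
  have a: "fin x" "\<forall>k. smooth_vf k \<longrightarrow> OpT F x k = vf_act (fT F x) k" using LieA_main[OF F x] by auto
  have b: "fin y" "\<forall>k. smooth_vf k \<longrightarrow> OpT F y k = vf_act (fT F y) k" using LieA_main[OF F y] by auto
  show ?thesis by (rule fT_comm_step[OF F a(1) b(1) a(2) b(2)])
qed


lemma fT_tadd: "fin x \<Longrightarrow> fin y \<Longrightarrow> fT F (tadd x y) = (\<lambda>p. fT F x p + fT F y p)"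
  unfolding fT_ev by (simp add: ev_tadd)

lemma fT_tscale: "fin x \<Longrightarrow> fT F (tscale c x) = (\<lambda>p. c *\<^sub>R fT F x p)"
  unfolding fT_ev by (simp add: ev_tscale)

lemma fT_word: "fT F (word v) = fW F v"
  unfolding fT_ev by (simp add: ev_word)

theorem proposition3p16:
  fixes br :: "'a \<Rightarrow> 'a \<Rightarrow> 'a option" and \<omega> :: "'a \<Rightarrow> nat"
    and F :: "'a \<Rightarrow> real^'e \<Rightarrow> real^'e"
  assumes "bracket_comm br" and "bracket_assoc br" and "weight_ok br \<omega>"
    and "\<forall>a. smooth_vf (F a)"
  shows "linear_on_T (fhat br F) Tset
       \<and> (\<forall>x\<in>Tset. smooth_vf (fhat br F x))
       \<and> lie_morph_on (fhat br F) (LieHat br)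
       \<and> (\<forall>a. fhat br F (PsiH br (word [a])) = F a)
       \<and> (\<forall>g. lie_morph_on g (LieHat br) \<and> (\<forall>a. g (PsiH br (word [a])) = F a)
              \<longrightarrow> (\<forall>x\<in>LieHat br. g x = fhat br F x))"
proof -
  note as = assms(2) and wok = assms(3)
  have F: "\<And>a. smooth_vf (F a)" using assms(4) by blast
  have fphi: "\<And>a. fin (phiL br a)" by (rule fin_phiL[OF wok])
  have fpsi: "\<And>a. fin (psiL br a)" by (rule fin_psiL[OF wok])
  have PhiPsi: "PhiH br (PsiH br x) = x" if "fin x" for x
  proof -
    have "PhiH br (PsiH br x) = mult_ext (\<lambda>a. mult_ext (phiL br) (psiL br a)) x"
      unfolding PhiH_def PsiH_def by (rule mult_ext_comp[OF that fphi fpsi])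
    also have "\<dots> = mult_ext (\<lambda>a. word [a]) x" by (simp add: phi_psi[OF as wok])
    also have "\<dots> = x" by (rule mult_ext_unit[OF that])
    finally show ?thesis .
  qed
  have finPhi: "fin x \<Longrightarrow> fin (PhiH br x)" for x unfolding PhiH_def by (rule fin_mult_ext[OF _ fphi])
  have finPsi: "fin x \<Longrightarrow> fin (PsiH br x)" for x unfolding PsiH_def by (rule fin_mult_ext[OF _ fpsi])
  have finLieA: "x \<in> LieA \<Longrightarrow> fin x" for x using LieA_main[OF F] by blast
  have fhatPsi: "fhat br F (PsiH br x) = fT F x" if "fin x" for x
    unfolding fhat_def using PhiPsi[OF that] by simp
  have lin: "linear_on_T (fhat br F) Tset"
    unfolding linear_on_T_def
  proof (intro conjI ballI allI)
    fix x y :: "'a list \<Rightarrow> real" assume x: "x \<in> Tset" and y: "y \<in> Tset"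
    hence x: "fin x" and y: "fin y" by (simp_all add: Tset_fin)
    show "fhat br F (tadd x y) = (\<lambda>p. fhat br F x p + fhat br F y p)"
      unfolding fhat_def PhiH_def mult_ext_tadd[OF x y]
      by (rule fT_tadd[OF finPhi[OF x, unfolded PhiH_def] finPhi[OF y, unfolded PhiH_def]])
  next
    fix c and x :: "'a list \<Rightarrow> real" assume x: "x \<in> Tset"
    hence x: "fin x" by (simp add: Tset_fin)
    show "fhat br F (tscale c x) = (\<lambda>p. c *\<^sub>R fhat br F x p)"
      unfolding fhat_def PhiH_def mult_ext_tscale[OF x]
      by (rule fT_tscale[OF finPhi[OF x, unfolded PhiH_def]])
  qed
  have smooth: "smooth_vf (fhat br F x)" for x
    unfolding fhat_def by (rule smooth_fT[OF F])
  have LH_T: "LieHat br \<subseteq> Tset"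
  proof
    fix X assume "X \<in> LieHat br"
    then obtain x where x: "x \<in> LieA" "X = PsiH br x" unfolding LieHat_def by blast
    show "X \<in> Tset" unfolding x(2) Tset_fin by (rule finPsi[OF finLieA[OF x(1)]])
  qed
  have lin_LH: "linear_on_T (fhat br F) (LieHat br)"
    using lin LH_T unfolding linear_on_T_def by blast
  have comm_Psi: "commutator (PsiH br x) (PsiH br y) = PsiH br (commutator x y)" if "fin x" "fin y" for x y
    unfolding PsiH_def by (rule mult_ext_commutator[OF that fpsi, symmetric])
  have morph: "lie_morph_on (fhat br F) (LieHat br)"
    unfolding lie_morph_on_def
  proof (intro conjI ballI lin_LH smooth)
    fix X Y assume "X \<in> LieHat br" "Y \<in> LieHat br"
    then obtain x y where x: "x \<in> LieA" "X = PsiH br x" and y: "y \<in> LieA" "Y = PsiH br y"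
      unfolding LieHat_def by blast
    have fx: "fin x" and fy: "fin y" using x y finLieA by auto
    show "fhat br F (commutator X Y) = vf_bracket (fhat br F X) (fhat br F Y)"
      unfolding x(2) y(2) comm_Psi[OF fx fy] fhatPsi[OF fin_commutator[OF fx fy]] fhatPsi[OF fx] fhatPsi[OF fy]
      by (rule fT_commutator[OF F x(1) y(1)])
  qed
  have gen: "fhat br F (PsiH br (word [a])) = F a" for a
    by (simp add: fhatPsi fin_word fT_word)
  have uniq: "g x = fhat br F x"
    if g: "lie_morph_on g (LieHat br)" and ga: "\<forall>a. g (PsiH br (word [a])) = F a" and x: "x \<in> LieHat br" for g x
  proof -
    have "g (PsiH br z) = fhat br F (PsiH br z)" if "z \<in> LieA" for z
      using that
    proof (induction z rule: LieA.induct)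
      case (gen a) thus ?case using ga by (simp add: \<open>\<And>a. fhat br F (PsiH br (word [a])) = F a\<close>)
    next
      case (add x y)
      have fx: "fin x" and fy: "fin y" using add.hyps finLieA by auto
      have X: "PsiH br x \<in> LieHat br" and Y: "PsiH br y \<in> LieHat br" using add.hyps by (auto simp: LieHat_def)
      have e: "PsiH br (tadd x y) = tadd (PsiH br x) (PsiH br y)" unfolding PsiH_def by (rule mult_ext_tadd[OF fx fy])
      show ?case unfolding e using g lin_LH X Y add.IH unfolding lie_morph_on_def linear_on_T_def by simp
    next
      case (scale x c)
      have fx: "fin x" using scale.hyps finLieA by auto
      have X: "PsiH br x \<in> LieHat br" using scale.hyps by (auto simp: LieHat_def)
      have e: "PsiH br (tscale c x) = tscale c (PsiH br x)" unfolding PsiH_def by (rule mult_ext_tscale[OF fx])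
      show ?case unfolding e using g lin_LH X scale.IH unfolding lie_morph_on_def linear_on_T_def by simp
    next
      case (brk x y)
      have fx: "fin x" and fy: "fin y" using brk.hyps finLieA by auto
      have X: "PsiH br x \<in> LieHat br" and Y: "PsiH br y \<in> LieHat br" using brk.hyps by (auto simp: LieHat_def)
      show ?case unfolding comm_Psi[OF fx fy, symmetric]
        using g morph X Y brk.IH unfolding lie_morph_on_def by simp
    qed
    thus ?thesis using x unfolding LieHat_def by blast
  qed
  show ?thesis
    using lin smooth morph gen uniq by blast
qed


end
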